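(* Let $a,a^\dagger$ be the annihilation and creation operators of the harmonic oscillator, $[a,a^\dagger]=1$, with vacuum $|0\rangle$ ($a|0\rangle=0$, $\langle0|a^\dagger=0$, $\langle0|0\rangle=1$). For positive integers $n$ let $A_n^\dagger$ act on the formal span of $\{(a^\dagger)^m|0\rangle\}_{m\ge0}$ by $A_n^\dagger(a^\dagger)^m|0\rangle=\frac{m!}{(mn)!}(a^\dagger)^{mn}|0\rangle$, and let $A_n$ act from the right on the formal span of $\{\langle0|a^m\}_{m\ge0}$ by $\langle0|a^mA_n=\langle0|a^{mn}$. Then for $\mathrm{Re}(s)>1$, $$\zeta(s)=\langle0|\,a\Big(\prod_{q\text{ prime}}\frac{1}{1-A_q}\Big)(a^\dagger a)^{-s}\Big(\prod_{p\text{ prime}}\frac{1}{1-A_p^\dagger}\Big)a^\dagger\,|0\rangle,$$ where $\zeta(s)=\sum_{n\ge1}n^{-s}$ is the Riemann zeta function.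
   Context: The number states $|n\rangle=(a^\dagger)^n|0\rangle/\sqrt{n!}$ are orthonormal and $(a^\dagger a)^{-s}$ acts by $(a^\dagger a)^{-s}|n\rangle=n^{-s}|n\rangle$ for $n\ge1$. The products $\prod_p\frac{1}{1-A_p^\dagger}$, with $\frac{1}{1-A_p^\dagger}=\sum_{k\ge0}(A_p^\dagger)^k$, are expanded formally (the $A_p^\dagger$ commute), applied to $a^\dagger|0\rangle$ coefficientwise, similarly for the $A_q$ acting on $\langle0|a$, and the resulting pairing is evaluated termwise. *)

theory Defs
  imports "HOL-Analysis.Analysis" "HOL-Computational_Algebra.Primes"
begin

text \<open>States are represented by their coordinates in the orthonormal number basis:
  a ket \<open>\<psi> :: nat \<Rightarrow> complex\<close> stands for \<open>\<Sum>j. \<psi> j |j\<rangle>\<close> and a bra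
  \<open>\<phi> :: nat \<Rightarrow> complex\<close> stands for \<open>\<Sum>j. \<phi> j \<langle>j|\<close> (finitely supported).\<close>

type_synonym state = "nat \<Rightarrow> complex"

definition vac :: state where
  "vac = (\<lambda>j. if j = 0 then 1 else 0)"

definition cre :: "state \<Rightarrow> state" where
  "cre \<psi> = (\<lambda>j. case j of 0 \<Rightarrow> 0 | Suc i \<Rightarrow> complex_of_real (sqrt (real (Suc i))) * \<psi> i)"

text \<open>Right multiplication of a bra by the annihilation operator: \<open>\<langle>j| a = sqrt(j+1)\<langle>j+1|\<close>.\<close>
definition bra_ann :: "state \<Rightarrow> state" where
  "bra_ann \<phi> = (\<lambda>j. case j of 0 \<Rightarrow> 0 | Suc i \<Rightarrow> complex_of_real (sqrt (real (Suc i))) * \<phi> i)"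

definition supp :: "state \<Rightarrow> nat set" where
  "supp \<psi> = {m. \<psi> m \<noteq> 0}"

text \<open>\<open>A\<^sub>n\<^sup>\<dagger>\<close>: linear extension of \<open>(a\<^sup>\<dagger>)\<^sup>m|0\<rangle> \<mapsto> m!/(mn)! (a\<^sup>\<dagger>)\<^sup>m\<^sup>n|0\<rangle>\<close>, using
  \<open>(a\<^sup>\<dagger>)\<^sup>m|0\<rangle> = sqrt(m!) |m\<rangle>\<close> to read off the coordinate of \<open>\<psi>\<close> along \<open>(a\<^sup>\<dagger>)\<^sup>m|0\<rangle>\<close>.\<close>
definition A_dag :: "nat \<Rightarrow> state \<Rightarrow> state" where
  "A_dag n \<psi> = (\<lambda>j. \<Sum>m\<in>supp \<psi>.
      (\<psi> m / complex_of_real (sqrt (fact m))) * (fact m / fact (m * n)) * (cre ^^ (m * n)) vac j)"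

text \<open>\<open>A\<^sub>n\<close> acting from the right on bras: linear extension of \<open>\<langle>0|a\<^sup>m \<mapsto> \<langle>0|a\<^sup>m\<^sup>n\<close>,
  using \<open>\<langle>0|a\<^sup>m = sqrt(m!) \<langle>m|\<close>.\<close>
definition A_bra :: "nat \<Rightarrow> state \<Rightarrow> state" where
  "A_bra n \<phi> = (\<lambda>j. \<Sum>m\<in>supp \<phi>.
      (\<phi> m / complex_of_real (sqrt (fact m))) * (bra_ann ^^ (m * n)) vac j)"

text \<open>\<open>(a\<^sup>\<dagger>a)\<^sup>-\<^sup>s |n\<rangle> = n\<^sup>-\<^sup>s |n\<rangle>\<close> (for \<open>n \<ge> 1\<close>; the \<open>|0\<rangle>\<close> component never occurs).\<close>
definition num_pow :: "complex \<Rightarrow> state \<Rightarrow> state" where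
  "num_pow s \<psi> = (\<lambda>j. of_nat j powr (- s) * \<psi> j)"

text \<open>Pairing of a bra with a ket (number states orthonormal).\<close>
definition pairing :: "state \<Rightarrow> state \<Rightarrow> complex" where
  "pairing \<phi> \<psi> = (\<Sum>j\<in>supp \<phi>. \<phi> j * \<psi> j)"

text \<open>Exponent vectors of the formal expansion of \<open>\<Prod>\<^sub>p 1/(1-X\<^sub>p) = \<Sum>\<^sub>k \<Prod>\<^sub>p X\<^sub>p\<^sup>k\<^sup>p\<close>:
  finitely supported functions supported on primes.\<close>
definition exps :: "(nat \<Rightarrow> nat) set" where
  "exps = {k. finite {p. k p \<noteq> 0} \<and> (\<forall>p. k p \<noteq> 0 \<longrightarrow> prime p)}"

text \<open>\<open>\<Prod>\<^sub>p (X\<^sub>p)\<^sup>k\<^sup>p\<close> applied to a state (the operators commute; we use increasing order of p).\<close>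
definition apply_monomial :: "(nat \<Rightarrow> state \<Rightarrow> state) \<Rightarrow> (nat \<Rightarrow> nat) \<Rightarrow> state \<Rightarrow> state" where
  "apply_monomial X k = foldr (\<lambda>p f. (X p ^^ k p) \<circ> f) (sorted_list_of_set {p. k p \<noteq> 0}) id"

definition zeta_series :: "complex \<Rightarrow> complex" where
  "zeta_series s = (\<Sum>n. 1 / (of_nat (Suc n)) powr s)"

end

theory Submission
  imports Defs
begin

definition delta :: "complex \<Rightarrow> nat \<Rightarrow> state" where
  "delta c m = (\<lambda>j. if j = m then c else 0)"

lemma supp_delta: "supp (delta c m) = (if c = 0 then {} else {m})"
  by (auto simp: supp_def delta_def)

lemma cre_pow_vac: "(cre ^^ m) vac = delta (of_real (sqrt (fact m))) m"
proof (induction m)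
  case 0 then show ?case by (auto simp: vac_def delta_def)
next
  case (Suc m)
  have e: "(cre ^^ Suc m) vac = cre (delta (of_real (sqrt (fact m))) m)"
    by (simp only: funpow.simps o_apply Suc)
  have "cre (delta (of_real (sqrt (fact m))) m) = delta (of_real (sqrt (fact (Suc m)))) (Suc m)"
    by (auto simp: delta_def cre_def fun_eq_iff real_sqrt_mult split: nat.split)
  then show ?case using e by simp
qed

lemma ann_pow_vac: "(bra_ann ^^ m) vac = delta (of_real (sqrt (fact m))) m"
proof (induction m)
  case 0 then show ?case by (auto simp: vac_def delta_def)
next
  case (Suc m)
  have e: "(bra_ann ^^ Suc m) vac = bra_ann (delta (of_real (sqrt (fact m))) m)"
    by (simp only: funpow.simps o_apply Suc)
  have "bra_ann (delta (of_real (sqrt (fact m))) m) = delta (of_real (sqrt (fact (Suc m)))) (Suc m)"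
    by (auto simp: delta_def bra_ann_def fun_eq_iff real_sqrt_mult split: nat.split)
  then show ?case using e by simp
qed

lemma A_dag_delta_gen:
  assumes ne: "c \<noteq> 0"
  shows "A_dag n (delta c m) = (\<lambda>j. (c / complex_of_real (sqrt (fact m))) * (fact m / fact (m * n))
      * delta (of_real (sqrt (fact (m*n)))) (m*n) j)"
  unfolding A_dag_def supp_delta using ne by (simp add: cre_pow_vac delta_def)

lemma A_bra_delta_gen:
  assumes ne: "c \<noteq> 0"
  shows "A_bra n (delta c m) = (\<lambda>j. (c / complex_of_real (sqrt (fact m)))
      * delta (of_real (sqrt (fact (m*n)))) (m*n) j)"
  unfolding A_bra_def supp_delta using ne by (simp add: ann_pow_vac delta_def)

lemma scal1: "(1 / complex_of_real (sqrt (fact m))) / complex_of_real (sqrt (fact m)) * (fact m / fact (m * n))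
        * complex_of_real (sqrt (fact (m * n))) = 1 / complex_of_real (sqrt (fact (m*n)))"
proof -
  have a: "sqrt (fact m) * sqrt (fact m) = (fact m :: real)" by simp
  have b: "sqrt (fact (m*n)) * sqrt (fact (m*n)) = (fact (m*n) :: real)" by simp
  have "(1 / sqrt (fact m)) / (sqrt (fact m)) * (fact m / fact (m * n))
      * (sqrt (fact (m * n))) = (1 / sqrt (fact (m*n)) :: real)"
    by (simp add: divide_simps)
  then have "complex_of_real ((1 / sqrt (fact m)) / (sqrt (fact m)) * (fact m / fact (m * n))
      * (sqrt (fact (m * n)))) = complex_of_real (1 / sqrt (fact (m*n)))" by (rule arg_cong)
  then show ?thesis by (simp only: of_real_mult of_real_divide of_real_fact of_real_1)
qed

lemma scal2: "complex_of_real (sqrt (fact m)) / complex_of_real (sqrt (fact m))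
        * complex_of_real (sqrt (fact (m * n))) = complex_of_real (sqrt (fact (m*n)))"
proof -
  have "complex_of_real (sqrt (fact m)) \<noteq> 0" by simp
  then show ?thesis by simp
qed

lemma A_dag_delta:
  "A_dag n (delta (1 / of_real (sqrt (fact m))) m) = delta (1 / of_real (sqrt (fact (m*n)))) (m*n)"
  apply (subst A_dag_delta_gen)
   apply simp
  apply (simp only: fun_eq_iff delta_def)
  using scal1[of m n] by (auto simp del: of_real_fact)

lemma A_bra_delta:
  "A_bra n (delta (of_real (sqrt (fact m))) m) = delta (of_real (sqrt (fact (m*n)))) (m*n)"
  apply (subst A_bra_delta_gen)
   apply simp
  apply (simp only: fun_eq_iff delta_def)
  using scal2[of m n] by (auto simp del: of_real_fact)

lemma A_dag_pow: "(A_dag p ^^ j) (delta (1 / of_real (sqrt (fact m))) m)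
   = delta (1 / of_real (sqrt (fact (m * p ^ j)))) (m * p ^ j)"
  by (induction j) (simp_all add: A_dag_delta, simp_all add: mult_ac)

lemma A_bra_pow: "(A_bra p ^^ j) (delta (of_real (sqrt (fact m))) m)
   = delta (of_real (sqrt (fact (m * p ^ j)))) (m * p ^ j)"
  by (induction j) (simp_all add: A_bra_delta, simp_all add: mult_ac)

lemma foldr_dag: "foldr (\<lambda>p f. (A_dag p ^^ k p) \<circ> f) xs id (delta (1 / of_real (sqrt (fact m))) m)
   = delta (1 / of_real (sqrt (fact (m * (\<Prod>p\<leftarrow>xs. p ^ k p))))) (m * (\<Prod>p\<leftarrow>xs. p ^ k p))"
  by (induction xs arbitrary: m) (simp_all add: A_dag_pow, simp_all add: mult_ac)

lemma foldr_bra: "foldr (\<lambda>p f. (A_bra p ^^ k p) \<circ> f) xs id (delta (of_real (sqrt (fact m))) m)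
   = delta (of_real (sqrt (fact (m * (\<Prod>p\<leftarrow>xs. p ^ k p))))) (m * (\<Prod>p\<leftarrow>xs. p ^ k p))"
  by (induction xs arbitrary: m) (simp_all add: A_bra_pow, simp_all add: mult_ac)

definition nk :: "(nat \<Rightarrow> nat) \<Rightarrow> nat" where
  "nk k = (\<Prod>p\<in>{p. k p \<noteq> 0}. p ^ k p)"

lemma prodlist_nk: "k \<in> exps \<Longrightarrow> (\<Prod>p\<leftarrow>sorted_list_of_set {p. k p \<noteq> 0}. p ^ k p) = nk k"
proof -
  assume "k \<in> exps"
  then have f: "finite {p. k p \<noteq> 0}" unfolding exps_def by blast
  show ?thesis unfolding nk_def
    using prod.distinct_set_conv_list[of "sorted_list_of_set {p. k p \<noteq> 0}" "\<lambda>p. p ^ k p"] f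
    by simp
qed

lemma cre_vac: "cre vac = delta (1 / of_real (sqrt (fact 1))) 1"
  by (auto simp: cre_def vac_def delta_def fun_eq_iff split: nat.split)

lemma bra_vac: "bra_ann vac = delta (of_real (sqrt (fact 1))) 1"
  by (auto simp: bra_ann_def vac_def delta_def fun_eq_iff split: nat.split)

lemma dag_mono: "k \<in> exps \<Longrightarrow> apply_monomial A_dag k (cre vac) = delta (1 / of_real (sqrt (fact (nk k)))) (nk k)"
proof -
  assume k: "k \<in> exps"
  show ?thesis
    unfolding apply_monomial_def cre_vac foldr_dag prodlist_nk[OF k] mult_1 ..
qed

lemma bra_mono: "k \<in> exps \<Longrightarrow> apply_monomial A_bra k (bra_ann vac) = delta (of_real (sqrt (fact (nk k)))) (nk k)"
proof -
  assume k: "k \<in> exps"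
  show ?thesis
    unfolding apply_monomial_def bra_vac foldr_bra prodlist_nk[OF k] mult_1 ..
qed

lemma num_pow_delta: "num_pow s (delta c N) = delta (of_nat N powr (- s) * c) N"
  by (auto simp: num_pow_def delta_def fun_eq_iff)

lemma pairing_delta: "pairing (delta a M) (delta b N) = (if M = N then a * b else 0)"
  unfolding pairing_def supp_delta by (auto simp: delta_def)

lemma nk_pos: "k \<in> exps \<Longrightarrow> nk k > 0"
  unfolding nk_def exps_def by (auto intro!: prod_pos simp: prime_gt_0_nat)

lemma mult_nk: assumes "k \<in> exps" "prime q" shows "multiplicity q (nk k) = k q"
proof -
  have f: "finite {p. k p \<noteq> 0}" and pr: "\<And>p. p \<in> {p. k p \<noteq> 0} \<Longrightarrow> prime p"
    using assms(1) unfolding exps_def by auto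
  show ?thesis unfolding nk_def
    using multiplicity_prod_prime_powers[OF f pr assms(2), of k] by auto
qed

lemma nk_inj: "inj_on nk exps"
proof (rule inj_onI)
  fix k l assume k: "k \<in> exps" and l: "l \<in> exps" and e: "nk k = nk l"
  show "k = l"
  proof
    fix q show "k q = l q"
    proof (cases "prime q")
      case True then show ?thesis using mult_nk[OF k True] mult_nk[OF l True] e by simp
    next
      case False then have "k q = 0" "l q = 0" using k l unfolding exps_def by auto
      then show ?thesis by simp
    qed
  qed
qed

lemma nk_image: "nk ` exps = {0<..}"
proof
  show "nk ` exps \<subseteq> {0<..}" using nk_pos by auto
next
  show "{0<..} \<subseteq> nk ` exps"
  proof
    fix n :: nat assume "n \<in> {0<..}"
    then have n: "n > 0" by simp
    define k where "k = (\<lambda>p. if prime p then multiplicity p n else 0)"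
    have s: "{p. k p \<noteq> 0} = prime_factors n"
      using n by (auto simp: k_def prime_factors_multiplicity)
    have f1: "finite {p. k p \<noteq> 0}" by (subst s) simp
    have f2: "\<forall>p. k p \<noteq> 0 \<longrightarrow> prime p" by (simp add: k_def)
    have "k \<in> exps" unfolding exps_def using f1 f2 by blast
    moreover have "nk k = n"
    proof -
      have "nk k = (\<Prod>p\<in>prime_factors n. p ^ multiplicity p n)" unfolding nk_def s
        by (rule prod.cong) (auto simp: k_def)
      also have "\<dots> = n" using prod_prime_factors[of n] n by simp
      finally show ?thesis .
    qed
    ultimately show "n \<in> nk ` exps" by blast
  qed
qed

lemma zeta_has_sum:
  assumes "Re s > 1"
  shows "((\<lambda>n::nat. 1 / (of_nat (Suc n)) powr s) has_sum zeta_series s) UNIV"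
proof -
  have nrm: "norm (1 / (of_nat (Suc n) :: complex) powr s) = real (Suc n) powr (- Re s)" for n
  proof -
    have "cmod ((of_nat (Suc n) :: complex) powr s) = real (Suc n) powr Re s"
      by (subst norm_powr_real_powr) auto
    then show ?thesis by (simp add: norm_divide powr_minus divide_inverse norm_inverse)
  qed
  have "summable (\<lambda>n. real n powr (- Re s))"
    using assms by (subst summable_real_powr_iff) auto
  then have "summable (\<lambda>n. real (Suc n) powr (- Re s))"
    by (subst summable_Suc_iff)
  then have sm: "summable (\<lambda>n. norm (1 / (of_nat (Suc n) :: complex) powr s))"
    by (simp only: nrm)
  show ?thesis
    unfolding zeta_series_def
    by (rule norm_summable_imp_has_sum[OF sm summable_sums[OF summable_norm_cancel[OF sm]]])
qed

theorem mainTheorem6: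
  fixes s :: complex
  assumes "Re s > 1"
  shows "((\<lambda>(l, k). pairing (apply_monomial A_bra l (bra_ann vac))
                              (num_pow s (apply_monomial A_dag k (cre vac))))
            has_sum zeta_series s) (exps \<times> exps)"
proof -
  define g where "g = (\<lambda>(l, k). pairing (apply_monomial A_bra l (bra_ann vac))
                              (num_pow s (apply_monomial A_dag k (cre vac))))"
  define D where "D = (\<lambda>k. (k, k)) ` exps"
  have gval: "g (l, k) = (if l = k then 1 / of_nat (nk k) powr s else 0)"
    if "l \<in> exps" "k \<in> exps" for l k
  proof -
    have ne: "(of_real (sqrt (fact (nk l))) :: complex) \<noteq> 0" by simp
    have "g (l, k) = (if nk l = nk k then of_real (sqrt (fact (nk l))) *
           (of_nat (nk k) powr (- s) * of_real (1 / sqrt (fact (nk k)))) else 0)"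
      unfolding g_def using that ne
      by (simp add: bra_mono dag_mono num_pow_delta pairing_delta)
    also have "\<dots> = (if l = k then 1 / of_nat (nk k) powr s else 0)"
      using nk_inj that by (auto simp: inj_on_def powr_minus divide_inverse
            simp flip: of_real_mult)
    finally show ?thesis .
  qed
  have "(g has_sum zeta_series s) (exps \<times> exps) \<longleftrightarrow> (g has_sum zeta_series s) D"
    by (rule has_sum_cong_neutral) (auto simp: D_def gval)
  also have "\<dots> \<longleftrightarrow> ((g \<circ> (\<lambda>k. (k, k))) has_sum zeta_series s) exps"
    unfolding D_def by (rule has_sum_reindex) (auto simp: inj_on_def)
  also have "\<dots> \<longleftrightarrow> (((\<lambda>n. 1 / of_nat n powr s) \<circ> nk) has_sum zeta_series s) exps"
    by (rule has_sum_cong) (simp add: gval)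
  also have "\<dots> \<longleftrightarrow> ((\<lambda>n. 1 / of_nat n powr s) has_sum zeta_series s) (nk ` exps)"
    by (rule has_sum_reindex[symmetric, OF nk_inj])
  also have "nk ` exps = Suc ` UNIV"
    unfolding nk_image using gr0_implies_Suc by (auto simp: image_iff)
  also have "((\<lambda>n. 1 / of_nat n powr s) has_sum zeta_series s) (Suc ` UNIV) \<longleftrightarrow>
      (((\<lambda>n. 1 / of_nat n powr s) \<circ> Suc) has_sum zeta_series s) UNIV"
    by (rule has_sum_reindex) auto
  finally show ?thesis
    using zeta_has_sum[OF assms] by (simp add: g_def comp_def)
qed

end
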